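(* Let $\mathfrak{M}=\{M^{(\alpha)}:\alpha>0\}$ be a non-quasianalytic weight matrix of R-moderate growth and consider $\mathfrak{K}=\mathfrak{K}(\mathfrak{M})=\{K^{(\alpha)}:\alpha>0\}$. Then for every $\alpha>0$ there exists $\beta>0$ with $K^{(\alpha)}\prec_{SV}M^{(\beta)}$.
   Context: A weight sequence is $M=(M_k)_{k\ge0}$ with $M_k=\mu_0\cdots\mu_k$, $1=\mu_0\le\mu_1\le\cdots$, $\mu_k\to\infty$; non-quasianalytic if $\sum1/\mu_k<\infty$. A weight matrix is a family $\{M^{(\alpha)}:\alpha>0\}$ of weight sequences with $M^{(\alpha)}\le M^{(\beta)}$ for $\alpha\le\beta$; non-quasianalytic if all members are; R-moderate growth: for every member $M$ there are a member $N$ and $C\ge1$ with $M_{j+k}\le C^{j+k}N_jN_k$. $M'\prec_{SV}M$ means: $\exists s\in\mathbb{N}_{\ge1}$, $\sup_{j\ge1}\frac1j\sup_{0\le i<j}(M'_j/(s^jM_i))^{1/(j-i)}\sum_{k\ge j}1/\mu_k<\infty$. $\omega_M(t)=\sup_k\log(t^kM_0/M_k)$, $\widetilde\omega_M=\omega_M+\log(1+t^2)$; $\kappa_\omega(t)=\int_1^\infty\omega(ts)s^{-2}ds$, $\varphi^*_\omega(x)=\sup_{y\ge0}(xy-\omega(e^y))$. $\kappa_\alpha=\kappa_{\widetilde\omega_{M^{(\alpha)}}}$, $K^{(\alpha)}_j=\exp(\varphi^*_{\kappa_\alpha}(j))$ with $\kappa_\alpha$ replaced by an equivalent normalized function (vanishing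 on $[0,1]$). *)

theory Defs
  imports "HOL-Analysis.Analysis"
begin

text \<open>Quotients mu_k = M_k / M_(k-1) (k \<ge> 1), mu_0 = M_0, so that M_k = mu_0 * ... * mu_k.\<close>
definition quot :: "(nat \<Rightarrow> real) \<Rightarrow> nat \<Rightarrow> real" where
  "quot M k = (if k = 0 then M 0 else M k / M (k - 1))"

definition weight_seq :: "(nat \<Rightarrow> real) \<Rightarrow> bool" where
  "weight_seq M \<longleftrightarrow> M 0 = 1 \<and> (\<forall>k. 0 < M k) \<and> incseq (quot M)
     \<and> filterlim (quot M) at_top sequentially"

definition nonquasianalytic :: "(nat \<Rightarrow> real) \<Rightarrow> bool" where
  "nonquasianalytic M \<longleftrightarrow> summable (\<lambda>k. 1 / quot M k)"

text \<open>Weight matrix indexed by alpha > 0 (values at alpha \<le> 0 are irrelevant).\<close>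
definition weight_matrix :: "(real \<Rightarrow> nat \<Rightarrow> real) \<Rightarrow> bool" where
  "weight_matrix Mat \<longleftrightarrow> (\<forall>\<alpha>>0. weight_seq (Mat \<alpha>))
     \<and> (\<forall>\<alpha> \<beta>. 0 < \<alpha> \<and> \<alpha> \<le> \<beta> \<longrightarrow> (\<forall>j. Mat \<alpha> j \<le> Mat \<beta> j))"

definition nonquasianalytic_matrix :: "(real \<Rightarrow> nat \<Rightarrow> real) \<Rightarrow> bool" where
  "nonquasianalytic_matrix Mat \<longleftrightarrow> (\<forall>\<alpha>>0. nonquasianalytic (Mat \<alpha>))"

definition R_moderate_growth :: "(real \<Rightarrow> nat \<Rightarrow> real) \<Rightarrow> bool" where
  "R_moderate_growth Mat \<longleftrightarrow> (\<forall>\<alpha>>0. \<exists>\<beta>>0. \<exists>C\<ge>1. \<forall>j k.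
      Mat \<alpha> (j + k) \<le> C ^ (j + k) * Mat \<beta> j * Mat \<beta> k)"

definition omegaM :: "(nat \<Rightarrow> real) \<Rightarrow> real \<Rightarrow> real" where
  "omegaM M t = (if 0 < t then (SUP k. ln (t ^ k * M 0 / M k)) else 0)"

definition omegaM_tilde :: "(nat \<Rightarrow> real) \<Rightarrow> real \<Rightarrow> real" where
  "omegaM_tilde M t = omegaM M t + ln (1 + t\<^sup>2)"

definition kappa :: "(real \<Rightarrow> real) \<Rightarrow> real \<Rightarrow> real" where
  "kappa \<omega> t = (LBINT s:{1..}. \<omega> (t * s) / s\<^sup>2)"

definition phistar :: "(real \<Rightarrow> real) \<Rightarrow> real \<Rightarrow> real" where
  "phistar \<omega> x = (SUP y\<in>{0..}. x * y - \<omega> (exp y))"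

definition normalized_version :: "(real \<Rightarrow> real) \<Rightarrow> (real \<Rightarrow> real) \<Rightarrow> bool" where
  "normalized_version \<kappa> \<kappa>' \<longleftrightarrow> (\<forall>t\<in>{0..1}. \<kappa>' t = 0)
     \<and> (\<exists>D. \<forall>t\<ge>0. \<bar>\<kappa>' t - \<kappa> t\<bar> \<le> D)"

definition assoc_seq :: "(real \<Rightarrow> real) \<Rightarrow> nat \<Rightarrow> real" where
  "assoc_seq \<kappa>' j = exp (phistar \<kappa>' (real j))"

definition prec_SV :: "(nat \<Rightarrow> real) \<Rightarrow> (nat \<Rightarrow> real) \<Rightarrow> bool" where
  "prec_SV M' M \<longleftrightarrow> (\<exists>s::nat. 1 \<le> s \<and> (\<exists>C. \<forall>j\<ge>1. \<forall>i<j.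
      (1 / real j) * (M' j / (real s ^ j * M i)) powr (1 / real (j - i))
        * (\<Sum>k. 1 / quot M (k + j)) \<le> C))"

end

theory Submission
  imports Defs
begin

lemma ws_M0: "weight_seq M \<Longrightarrow> M 0 = 1" by (simp add: weight_seq_def)
lemma ws_pos: "weight_seq M \<Longrightarrow> 0 < M k" by (simp add: weight_seq_def)
lemma ws_inc: "weight_seq M \<Longrightarrow> incseq (quot M)" by (simp add: weight_seq_def)
lemma ws_lim: "weight_seq M \<Longrightarrow> filterlim (quot M) at_top sequentially" by (simp add: weight_seq_def)

lemma quot_ge1: assumes "weight_seq M" shows "1 \<le> quot M k"
proof -
  have "quot M 0 \<le> quot M k" using ws_inc[OF assms] by (simp add: incseq_def)
  moreover have "quot M 0 = 1" using ws_M0[OF assms] by (simp add: quot_def)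
  ultimately show ?thesis by simp
qed

lemma quot_pos: "weight_seq M \<Longrightarrow> 0 < quot M k"
  using quot_ge1[of M k] by simp

lemma quot_mono: "weight_seq M \<Longrightarrow> i \<le> k \<Longrightarrow> quot M i \<le> quot M k"
  using ws_inc by (auto simp: incseq_def)

lemma M_Suc: assumes "weight_seq M" shows "M (Suc k) = M k * quot M (Suc k)"
  using ws_pos[OF assms, of k] by (simp add: quot_def)

lemma ln_term: assumes "weight_seq M" "0 < t"
  shows "ln (t ^ p * M 0 / M p) = (\<Sum>k\<in>{1..p}. ln (t / quot M k))"
proof (induction p)
  case 0 then show ?case using ws_M0[OF assms(1)] by simp
next
  case (Suc p)
  have pos: "0 < M p" "0 < quot M (Suc p)" using ws_pos[OF assms(1)] quot_pos[OF assms(1)] by auto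
  have "t ^ Suc p * M 0 / M (Suc p) = (t ^ p * M 0 / M p) * (t / quot M (Suc p))"
    using M_Suc[OF assms(1), of p] pos by (simp add: field_simps)
  moreover have "ln ((t ^ p * M 0 / M p) * (t / quot M (Suc p))) = ln (t ^ p * M 0 / M p) + ln (t / quot M (Suc p))"
    using pos assms ws_M0[OF assms(1)] by (subst ln_mult) auto
  ultimately have "ln (t ^ Suc p * M 0 / M (Suc p)) = ln (t ^ p * M 0 / M p) + ln (t / quot M (Suc p))"
    by simp
  then show ?case using Suc by (simp add: sum.atLeast1_atMost_eq)
qed

lemma M_le: assumes "weight_seq M" "i \<le> j" shows "M j \<le> M i * quot M j ^ (j - i)"
  using assms(2)
proof (induction j)
  case 0 then show ?case by simp
next
  case (Suc j)
  show ?case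
  proof (cases "i = Suc j")
    case True then show ?thesis by simp
  next
    case False
    then have ij: "i \<le> j" using Suc by simp
    have q: "quot M j \<le> quot M (Suc j)" using quot_mono[OF assms(1)] by simp
    have "M (Suc j) = M j * quot M (Suc j)" by (rule M_Suc[OF assms(1)])
    also have "\<dots> \<le> M i * quot M j ^ (j - i) * quot M (Suc j)"
      using Suc.IH[OF ij] quot_pos[OF assms(1)] by (simp add: mult_right_mono)
    also have "\<dots> \<le> M i * quot M (Suc j) ^ (j - i) * quot M (Suc j)"
      using q quot_pos[OF assms(1), of j] ws_pos[OF assms(1), of i] quot_pos[OF assms(1), of "Suc j"]
      by (intro mult_right_mono mult_left_mono power_mono) auto
    also have "\<dots> = M i * quot M (Suc j) ^ (Suc j - i)" using ij
      by (simp add: Suc_diff_le)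
    finally show ?thesis .
  qed
qed

lemma eventually_big: assumes "weight_seq M" shows "\<exists>P. \<forall>k>P. t \<le> quot M k"
proof -
  have "eventually (\<lambda>k. t \<le> quot M k) sequentially"
    using ws_lim[OF assms] by (simp add: filterlim_at_top)
  then obtain N where "\<forall>k\<ge>N. t \<le> quot M k" by (auto simp: eventually_sequentially)
  then show ?thesis by (intro exI[of _ N]) auto
qed

lemma sum_max_eq:
  fixes a :: "nat \<Rightarrow> real"
  assumes dec: "\<And>k. a (Suc k) \<le> a k"
  shows "\<exists>q\<le>m. (\<Sum>k\<in>{1..m}. max 0 (a k)) = (\<Sum>k\<in>{1..q}. a k)"
proof (induction m)
  case 0 then show ?case by simp
next
  case (Suc m)
  show ?case
  proof (cases "0 \<le> a (Suc m)")
    case True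
    have "\<forall>k\<le>Suc m. a (Suc m) \<le> a k" using lift_Suc_antimono_le[of a, OF dec] by blast
    with True have "\<forall>k\<in>{1..Suc m}. max 0 (a k) = a k" by force
    then have "(\<Sum>k\<in>{1..Suc m}. max 0 (a k)) = (\<Sum>k\<in>{1..Suc m}. a k)" by (intro sum.cong) auto
    then show ?thesis by blast
  next
    case False
    then obtain q where "q \<le> m" "(\<Sum>k\<in>{1..m}. max 0 (a k)) = (\<Sum>k\<in>{1..q}. a k)" using Suc by blast
    then show ?thesis using False by (intro exI[of _ q]) auto
  qed
qed

lemma omega_term_le: assumes ws: "weight_seq M" and t: "0 < t" and P: "\<forall>k>P. t \<le> quot M k"
  shows "ln (t ^ p * M 0 / M p) \<le> (\<Sum>k\<in>{1..P}. max 0 (ln (t / quot M k)))"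
proof -
  have z: "max 0 (ln (t / quot M k)) = 0" if "k > P" for k
  proof -
    have "t / quot M k \<le> 1" using P that quot_pos[OF ws, of k] by simp
    then have "ln (t / quot M k) \<le> 0" using t quot_pos[OF ws, of k] by simp
    then show ?thesis by simp
  qed
  have "ln (t ^ p * M 0 / M p) = (\<Sum>k\<in>{1..p}. ln (t / quot M k))" by (rule ln_term[OF ws t])
  also have "\<dots> \<le> (\<Sum>k\<in>{1..p}. max 0 (ln (t / quot M k)))" by (intro sum_mono) auto
  also have "\<dots> = (\<Sum>k\<in>{1..p}\<inter>{1..P}. max 0 (ln (t / quot M k)))"
    by (rule sum.mono_neutral_right) (auto intro!: z)
  also have "\<dots> \<le> (\<Sum>k\<in>{1..P}. max 0 (ln (t / quot M k)))"
    by (rule sum_mono2) auto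
  finally show ?thesis .
qed

lemma omega_bdd: assumes ws: "weight_seq M" and t: "0 < t"
  shows "bdd_above (range (\<lambda>k. ln (t ^ k * M 0 / M k)))"
proof -
  obtain P where "\<forall>k>P. t \<le> quot M k" using eventually_big[OF ws] by blast
  then show ?thesis using omega_term_le[OF ws t] by (intro bdd_aboveI) blast
qed

lemma omega_ge: assumes ws: "weight_seq M" and t: "0 < t"
  shows "ln (t ^ p * M 0 / M p) \<le> omegaM M t"
  unfolding omegaM_def using t by (auto intro!: cSUP_upper omega_bdd[OF ws t])

lemma omega_le: assumes ws: "weight_seq M" and t: "0 < t" and P: "\<forall>k>P. t \<le> quot M k"
  shows "omegaM M t \<le> (\<Sum>k\<in>{1..P}. max 0 (ln (t / quot M k)))"
  unfolding omegaM_def using t omega_term_le[OF ws t P] by (auto intro!: cSUP_least)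

lemma omega_eq: assumes ws: "weight_seq M" and t: "0 < t" and P: "\<forall>k>P. t \<le> quot M k"
  shows "omegaM M t = (\<Sum>k\<in>{1..P}. max 0 (ln (t / quot M k)))"
proof (rule antisym[OF omega_le[OF ws t P]])
  have dec: "ln (t / quot M (Suc k)) \<le> ln (t / quot M k)" for k
    using quot_mono[OF ws, of k "Suc k"] quot_pos[OF ws] t
    by (subst ln_le_cancel_iff) (auto intro!: divide_left_mono mult_pos_pos)
  obtain q where "q \<le> P" and q: "(\<Sum>k\<in>{1..P}. max 0 (ln (t / quot M k))) = (\<Sum>k\<in>{1..q}. ln (t / quot M k))"
    using sum_max_eq[of "\<lambda>k. ln (t / quot M k)", OF dec] by blast
  show "(\<Sum>k\<in>{1..P}. max 0 (ln (t / quot M k))) \<le> omegaM M t"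
    unfolding q ln_term[OF ws t, symmetric] by (rule omega_ge[OF ws t])
qed

lemma omega_nonneg: assumes ws: "weight_seq M" shows "0 \<le> omegaM M t"
proof (cases "0 < t")
  case True
  have "ln (t ^ 0 * M 0 / M 0) \<le> omegaM M t" by (rule omega_ge[OF ws True])
  then show ?thesis using ws_pos[OF ws, of 0] by simp
qed (simp add: omegaM_def)

lemma omega_mono: assumes ws: "weight_seq M" shows "mono (omegaM M)"
proof (rule monoI)
  fix a b :: real assume ab: "a \<le> b"
  show "omegaM M a \<le> omegaM M b"
  proof (cases "0 < a")
    case False then show ?thesis using omega_nonneg[OF ws, of b] by (simp add: omegaM_def)
  next
    case True
    then have b: "0 < b" using ab by simp
    have "(SUP k. ln (a ^ k * M 0 / M k)) \<le> (SUP k. ln (b ^ k * M 0 / M k))"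
    proof (rule cSUP_mono)
      show "bdd_above (range (\<lambda>k. ln (b ^ k * M 0 / M k)))" by (rule omega_bdd[OF ws b])
      fix n
      have "a ^ n * M 0 / M n \<le> b ^ n * M 0 / M n"
        using True ab ws_pos[OF ws] by (intro divide_right_mono mult_right_mono power_mono) (auto intro: less_imp_le)
      then have "ln (a ^ n * M 0 / M n) \<le> ln (b ^ n * M 0 / M n)"
        using True b ws_pos[OF ws] by (subst ln_le_cancel_iff) auto
      then show "\<exists>m\<in>UNIV. ln (a ^ n * M 0 / M n) \<le> ln (b ^ m * M 0 / M m)" by blast
    qed auto
    then show ?thesis using True b by (simp add: omegaM_def)
  qed
qed

lemma d_ge: fixes t s q :: real assumes t: "0 < t" and s: "1 \<le> s" and q: "0 < q"
  shows "0 \<le> max 0 (ln (t * s / q)) - max 0 (ln (t / q))"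
    and "exp 1 * max 1 (q / t) \<le> s \<Longrightarrow> 1 \<le> max 0 (ln (t * s / q)) - max 0 (ln (t / q))"
proof -
  have eq: "ln (t * s / q) = ln (t / q) + ln s"
  proof -
    have "t * s / q = (t / q) * s" by (simp add: field_simps)
    then show ?thesis using t s q by (simp only:) (subst ln_mult, auto)
  qed
  have ls: "0 \<le> ln s" using s by simp
  show "0 \<le> max 0 (ln (t * s / q)) - max 0 (ln (t / q))" using eq ls by linarith
  assume h: "exp 1 * max 1 (q / t) \<le> s"
  show "1 \<le> max 0 (ln (t * s / q)) - max 0 (ln (t / q))"
  proof (cases "q \<le> t")
    case True
    have "exp 1 \<le> exp 1 * max 1 (q / t)" by simp
    then have "exp 1 \<le> s" using h by linarith
    then have "ln (exp 1) \<le> ln s" using s by (subst ln_le_cancel_iff) auto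
    then have "1 \<le> ln s" by simp
    moreover have "0 \<le> ln (t / q)" using True t q by simp
    ultimately show ?thesis using eq by linarith
  next
    case False
    then have "max 1 (q / t) = q / t" using t by (simp add: max_def)
    then have "exp 1 * (q / t) \<le> s" using h by simp
    then have "exp 1 \<le> t * s / q" using t q by (simp add: field_simps)
    then have "ln (exp 1) \<le> ln (t * s / q)" by (subst ln_le_cancel_iff) (auto intro: less_le_trans[of 0 "exp 1"])
    moreover have "ln (t / q) \<le> 0" using False t q by simp
    ultimately show ?thesis by simp
  qed
qed

lemma omega_diff: assumes ws: "weight_seq M" and t: "0 < t" and s: "1 \<le> s"
  and A: "finite A" "A \<subseteq> {1..}"
  shows "omegaM M t + (\<Sum>k\<in>A. if exp 1 * max 1 (quot M k / t) \<le> s then 1 else 0) \<le> omegaM M (t * s)"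
proof -
  obtain P0 where P0: "\<forall>k>P0. t * s \<le> quot M k" using eventually_big[OF ws] by blast
  define P where "P = max P0 (Max (insert 0 A))"
  have ts: "t \<le> t * s" using t s by simp
  have P1: "\<forall>k>P. t * s \<le> quot M k" using P0 by (auto simp: P_def)
  have P2: "\<forall>k>P. t \<le> quot M k" using P1 ts by force
  have AP: "A \<subseteq> {1..P}"
  proof
    fix x assume x: "x \<in> A"
    then have "x \<le> Max (insert 0 A)" using A(1) by simp
    then show "x \<in> {1..P}" using x A(2) by (auto simp: P_def)
  qed
  have tsp: "0 < t * s" using t s by simp
  define d where "d k = max 0 (ln (t * s / quot M k)) - max 0 (ln (t / quot M k))" for k
  have "omegaM M (t * s) - omegaM M t = (\<Sum>k\<in>{1..P}. d k)"
    unfolding omega_eq[OF ws tsp P1] omega_eq[OF ws t P2] d_def by (simp add: sum_subtractf)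
  moreover have "(\<Sum>k\<in>A. if exp 1 * max 1 (quot M k / t) \<le> s then 1 else 0) \<le> (\<Sum>k\<in>A. d k)"
    using d_ge[OF t s quot_pos[OF ws]] by (intro sum_mono) (auto simp: d_def)
  moreover have "(\<Sum>k\<in>A. d k) \<le> (\<Sum>k\<in>{1..P}. d k)"
    using d_ge(1)[OF t s quot_pos[OF ws]] AP by (intro sum_mono2) (auto simp: d_def)
  ultimately show ?thesis by linarith
qed

lemma ln_le_2sqrt: fixes x :: real assumes "0 < x" shows "ln x \<le> 2 * (sqrt x - 1)"
proof -
  have "ln (sqrt x) \<le> sqrt x - 1" using assms by (intro ln_le_minus_one) auto
  then show ?thesis using ln_sqrt[of x] assms by simp
qed

lemma ln_1sq: fixes u :: real assumes u: "0 \<le> u" shows "ln (1 + u\<^sup>2) \<le> 4 * sqrt u"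
proof -
  have "ln (1 + u\<^sup>2) \<le> ln ((1 + u)\<^sup>2)" using u by (subst ln_le_cancel_iff) (auto simp: power2_eq_square algebra_simps intro: add_pos_nonneg)
  also have "\<dots> = 2 * ln (1 + u)" using u by (simp add: ln_realpow)
  also have "\<dots> \<le> 2 * (2 * (sqrt (1 + u) - 1))" using ln_le_2sqrt[of "1 + u"] u by simp
  also have "sqrt (1 + u) \<le> 1 + sqrt u"
  proof -
    have "1 + u \<le> (1 + sqrt u)\<^sup>2" using u by (simp add: power2_eq_square algebra_simps)
    then show ?thesis using real_sqrt_le_mono[of "1 + u" "(1 + sqrt u)\<^sup>2"] u by simp
  qed
  then have "2 * (2 * (sqrt (1 + u) - 1)) \<le> 4 * sqrt u" by simp
  finally show ?thesis .
qed

lemma sqrt_div_sq: fixes s :: real assumes "0 < s" shows "sqrt s / s\<^sup>2 = s powr (-3/2)"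
proof -
  have "sqrt s = s powr (1/2)" using assms by (simp add: powr_half_sqrt)
  moreover have "s\<^sup>2 = s powr 2" using assms by (simp add: powr_realpow)
  ultimately have "sqrt s / s\<^sup>2 = s powr (1/2) / s powr 2" by simp
  also have "\<dots> = s powr (1/2 - 2)" by (rule powr_diff[symmetric])
  finally have "sqrt s / s\<^sup>2 = s powr (1/2 - 2)" .
  then show ?thesis by simp
qed

lemma int_inv_sq: fixes a :: real assumes "0 < a"
  shows "((\<lambda>s. if s \<in> {a..} then 1 / s\<^sup>2 else 0) has_integral 1 / a) UNIV"
proof -
  have "((\<lambda>x. 1 / x ^ 2) has_integral 1 / (real (2 - 1) * a ^ (2 - 1))) {a..}"
    by (rule has_integral_inverse_power_to_inf) (use assms in auto)
  then have "((\<lambda>x::real. 1 / x\<^sup>2) has_integral 1 / a) {a..}" by simp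
  then show ?thesis by (subst has_integral_restrict_UNIV)
qed

lemma int_pow32: fixes a :: real assumes "0 < a"
  shows "((\<lambda>s. if s \<in> {a..} then s powr (-3/2) else 0) has_integral 2 * a powr (-1/2)) UNIV"
proof -
  have "((\<lambda>x. x powr (-3/2)) has_integral -(a powr (-3/2+1)) / (-3/2+1)) {a..}"
    by (rule has_integral_powr_to_inf) (use assms in auto)
  then have "((\<lambda>x::real. x powr (-3/2)) has_integral 2 * a powr (-1/2)) {a..}" by (simp add: mult.commute)
  then show ?thesis by (subst has_integral_restrict_UNIV)
qed

lemma omega_meas[measurable]: "weight_seq M \<Longrightarrow> omegaM M \<in> borel_measurable borel"
  by (rule borel_measurable_mono[OF omega_mono])

lemma omegat_nonneg: "weight_seq M \<Longrightarrow> 0 \<le> omegaM_tilde M u"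
  unfolding omegaM_tilde_def using omega_nonneg[of M u] by (simp add: add_nonneg_nonneg)

lemma kappa_nn: assumes ws: "weight_seq M"
  shows "kappa (omegaM_tilde M) t = enn2real (\<integral>\<^sup>+ s. ennreal (indicator {1..} s * (omegaM_tilde M (t * s) / s\<^sup>2)) \<partial>lborel)"
  unfolding kappa_def set_lebesgue_integral_def
proof (simp only: real_scaleR_def, rule integral_eq_nn_integral)
  show "(\<lambda>s. indicator {1..} s * (omegaM_tilde M (t * s) / s\<^sup>2)) \<in> borel_measurable lborel"
    using ws unfolding omegaM_tilde_def by measurable
  show "AE x in lborel. 0 \<le> indicator {1..} x * (omegaM_tilde M (t * x) / x\<^sup>2)"
    using omegat_nonneg[OF ws] by (auto simp: indicator_def)
qed

lemma F_bound: fixes t s q :: real assumes t: "0 < t" and s: "1 \<le> s" and q: "0 < q"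
  shows "max 0 (ln (t * s / q)) / s\<^sup>2 \<le> 2 * sqrt (t / q) * (if s \<in> {max 1 (q / t)..} then s powr (-3/2) else 0)"
proof (cases "1 \<le> t * s / q")
  case True
  then have "q / t \<le> s" using t q by (simp add: field_simps)
  then have mem: "s \<in> {max 1 (q / t)..}" using s by simp
  have "ln (t * s / q) \<le> 2 * sqrt (t * s / q)" using ln_le_2sqrt[of "t * s / q"] True by simp
  moreover have "sqrt (t * s / q) = sqrt (t / q) * sqrt s"
    by (subst real_sqrt_mult[symmetric]) (simp add: field_simps)
  ultimately have "max 0 (ln (t * s / q)) \<le> 2 * sqrt (t / q) * sqrt s"
    using True by simp
  then have "max 0 (ln (t * s / q)) / s\<^sup>2 \<le> 2 * sqrt (t / q) * (sqrt s / s\<^sup>2)"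
    using s by (simp add: divide_right_mono)
  also have "\<dots> = 2 * sqrt (t / q) * s powr (-3/2)" using s by (simp add: sqrt_div_sq)
  finally show ?thesis using mem by simp
next
  case False
  then have "ln (t * s / q) \<le> 0" using t q s by simp
  then show ?thesis using t q by simp
qed

lemma powr_neg_half: fixes q t :: real assumes "0 < q" "0 < t"
  shows "(q / t) powr (-1/2) = sqrt (t / q)"
proof -
  have "(q / t) powr (-1/2) = inverse ((q / t) powr (1/2))" by (simp add: powr_minus[symmetric])
  also have "\<dots> = inverse (sqrt (q / t))" using assms by (simp add: powr_half_sqrt)
  also have "\<dots> = sqrt (t / q)" by (simp add: real_sqrt_inverse[symmetric])
  finally show ?thesis .
qed

lemma kappa_fin: assumes ws: "weight_seq M" and nq: "nonquasianalytic M" and t: "1 \<le> t"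
  shows "(\<integral>\<^sup>+ s. ennreal (indicator {1..} s * (omegaM_tilde M (t * s) / s\<^sup>2)) \<partial>lborel) < top"
proof -
  define b where "b k = max 1 (quot M k / t)" for k
  define F where "F k s = 2 * sqrt (t / quot M k) * (if s \<in> {b k..} then s powr (-3/2) else (0::real))" for k s
  define f0 where "f0 s = 4 * sqrt t * (if s \<in> {1..} then s powr (-3/2) else (0::real))" for s
  have t0: "0 < t" using t by simp
  have Fnn: "0 \<le> F k s" for k s using t0 quot_pos[OF ws, of k] by (simp add: F_def)
  have f0nn: "0 \<le> f0 s" for s using t0 by (simp add: f0_def)
  have pw: "ennreal (indicator {1..} s * (omegaM_tilde M (t * s) / s\<^sup>2)) \<le> ennreal (f0 s) + (\<Sum>k. ennreal (F k s))" for s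
  proof (cases "1 \<le> s")
    case False then show ?thesis by simp
  next
    case True
    obtain P where P: "\<forall>k>P. t * s \<le> quot M k" using eventually_big[OF ws] by blast
    have ts: "0 < t * s" using t0 True by simp
    have "omegaM M (t * s) / s\<^sup>2 \<le> (\<Sum>k\<in>{1..P}. max 0 (ln (t * s / quot M k))) / s\<^sup>2"
      using omega_le[OF ws ts P] by (intro divide_right_mono) auto
    also have "\<dots> = (\<Sum>k\<in>{1..P}. max 0 (ln (t * s / quot M k)) / s\<^sup>2)" by (simp add: sum_divide_distrib)
    also have "\<dots> \<le> (\<Sum>k\<in>{1..P}. F k s)"
      unfolding F_def b_def by (intro sum_mono F_bound[OF t0 True quot_pos[OF ws]])
    finally have A1: "omegaM M (t * s) / s\<^sup>2 \<le> (\<Sum>k\<in>{1..P}. F k s)" .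
    have "ln (1 + (t * s)\<^sup>2) / s\<^sup>2 \<le> 4 * sqrt (t * s) / s\<^sup>2"
      using ln_1sq[of "t * s"] ts by (intro divide_right_mono) auto
    also have "\<dots> = 4 * sqrt t * (sqrt s / s\<^sup>2)" by (simp add: real_sqrt_mult)
    also have "\<dots> = f0 s" using True by (simp add: f0_def sqrt_div_sq)
    finally have A2: "ln (1 + (t * s)\<^sup>2) / s\<^sup>2 \<le> f0 s" .
    have "indicator {1..} s * (omegaM_tilde M (t * s) / s\<^sup>2) = omegaM M (t * s) / s\<^sup>2 + ln (1 + (t * s)\<^sup>2) / s\<^sup>2"
      using True by (simp add: omegaM_tilde_def add_divide_distrib)
    then have "indicator {1..} s * (omegaM_tilde M (t * s) / s\<^sup>2) \<le> f0 s + (\<Sum>k\<in>{1..P}. F k s)"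
      using A1 A2 by linarith
    then have "ennreal (indicator {1..} s * (omegaM_tilde M (t * s) / s\<^sup>2)) \<le> ennreal (f0 s + (\<Sum>k\<in>{1..P}. F k s))"
      by (rule ennreal_leI)
    also have "\<dots> = ennreal (f0 s) + (\<Sum>k\<in>{1..P}. ennreal (F k s))"
      using f0nn Fnn by (simp add: ennreal_plus sum_nonneg)
    also have "\<dots> \<le> ennreal (f0 s) + (\<Sum>k. ennreal (F k s))"
      by (intro add_left_mono sum_le_suminf) auto
    finally show ?thesis .
  qed
  have measF: "(\<lambda>s. ennreal (F k s)) \<in> borel_measurable lborel" for k
    unfolding F_def by measurable
  have measf0: "(\<lambda>s. ennreal (f0 s)) \<in> borel_measurable lborel"
    unfolding f0_def by measurable
  have bpos: "0 < b k" for k by (simp add: b_def)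
  have intF: "(\<integral>\<^sup>+ s. ennreal (F k s) \<partial>lborel) = ennreal (2 * sqrt (t / quot M k) * (2 * b k powr (-1/2)))" for k
  proof (rule nn_integral_has_integral_lborel)
    show "(\<lambda>s. F k s) \<in> borel_measurable borel" unfolding F_def by measurable
    show "0 \<le> F k s" for s by (rule Fnn)
    show "((\<lambda>s. F k s) has_integral 2 * sqrt (t / quot M k) * (2 * b k powr (-1/2))) UNIV"
      unfolding F_def by (intro has_integral_mult_right int_pow32 bpos)
  qed
  have Fle: "2 * sqrt (t / quot M k) * (2 * b k powr (-1/2)) \<le> 4 * t / quot M k" for k
  proof -
    have q: "0 < quot M k" by (rule quot_pos[OF ws])
    have "b k powr (-1/2) \<le> (quot M k / t) powr (-1/2)"
      by (rule powr_mono2') (use q t0 in \<open>auto simp: b_def\<close>)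
    also have "\<dots> = sqrt (t / quot M k)" by (rule powr_neg_half[OF q t0])
    finally have "2 * sqrt (t / quot M k) * (2 * b k powr (-1/2)) \<le> 2 * sqrt (t / quot M k) * (2 * sqrt (t / quot M k))"
      using q t0 by (intro mult_left_mono) auto
    also have "\<dots> = 4 * (sqrt (t / quot M k))\<^sup>2" by (simp add: power2_eq_square)
    also have "\<dots> = 4 * t / quot M k" using q t0 by simp
    finally show ?thesis .
  qed
  have intf0: "(\<integral>\<^sup>+ s. ennreal (f0 s) \<partial>lborel) = ennreal (4 * sqrt t * (2 * 1 powr (-1/2)))"
  proof (rule nn_integral_has_integral_lborel)
    show "(\<lambda>s. f0 s) \<in> borel_measurable borel" unfolding f0_def by measurable
    show "0 \<le> f0 s" for s by (rule f0nn)
    show "((\<lambda>s. f0 s) has_integral 4 * sqrt t * (2 * 1 powr (-1/2))) UNIV"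
      unfolding f0_def by (intro has_integral_mult_right int_pow32) auto
  qed
  have summ: "summable (\<lambda>k. 4 * t / quot M k)"
    using summable_mult[of "\<lambda>k. 1 / quot M k" "4 * t"] nq unfolding nonquasianalytic_def by simp
  have "(\<integral>\<^sup>+ s. ennreal (indicator {1..} s * (omegaM_tilde M (t * s) / s\<^sup>2)) \<partial>lborel)
      \<le> (\<integral>\<^sup>+ s. ennreal (f0 s) + (\<Sum>k. ennreal (F k s)) \<partial>lborel)"
    by (intro nn_integral_mono pw)
  also have "\<dots> = (\<integral>\<^sup>+ s. ennreal (f0 s) \<partial>lborel) + (\<Sum>k. \<integral>\<^sup>+ s. ennreal (F k s) \<partial>lborel)"
    using measF measf0 by (simp add: nn_integral_add nn_integral_suminf)
  also have "\<dots> \<le> ennreal (4 * sqrt t * (2 * 1 powr (-1/2))) + (\<Sum>k. ennreal (4 * t / quot M k))"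
    unfolding intf0 intF using Fle by (intro add_left_mono suminf_le ennreal_leI) auto
  also have "\<dots> < top"
  proof -
    have "(\<Sum>k. ennreal (4 * t / quot M k)) < top"
    proof -
      have "\<And>i. 0 \<le> 4 * t / quot M i" using t0 quot_pos[OF ws] by (simp add: less_imp_le)
      then have "(\<Sum>k. ennreal (4 * t / quot M k)) \<noteq> top" using ennreal_suminf_neq_top[OF summ] by blast
      then show ?thesis using less_top by blast
    qed
    moreover have "ennreal (4 * sqrt t * (2 * 1 powr (-1/2))) < top" by simp
    ultimately show ?thesis by (simp only: ennreal_add_less_top)
  qed
  finally show ?thesis .
qed

lemma kappa_lower: assumes ws: "weight_seq M" and nq: "nonquasianalytic M" and t: "1 \<le> t"
  and A: "finite A" "A \<subseteq> {1..}"
  shows "omegaM M t + (\<Sum>k\<in>A. 1 / (exp 1 * max 1 (quot M k / t))) \<le> kappa (omegaM_tilde M) t"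
proof -
  define c where "c k = exp 1 * max 1 (quot M k / t)" for k
  have t0: "0 < t" using t by simp
  have c1: "1 \<le> c k" for k
  proof -
    have "1 \<le> exp (1::real)" by simp
    moreover have "1 \<le> max 1 (quot M k / t)" by simp
    ultimately show ?thesis unfolding c_def using mult_mono[of 1 "exp 1" 1 "max 1 (quot M k / t)"] by simp
  qed
  have cpos: "0 < c k" for k using c1[of k] by simp
  define h where "h s = omegaM M t * (if s \<in> {1..} then 1 / s\<^sup>2 else 0) + (\<Sum>k\<in>A. (if s \<in> {c k..} then 1 / s\<^sup>2 else (0::real)))" for s
  define v where "v = omegaM M t * (1 / 1) + (\<Sum>k\<in>A. 1 / c k)"
  have hnn: "0 \<le> h s" for s
    unfolding h_def using omega_nonneg[OF ws, of t] by (intro add_nonneg_nonneg sum_nonneg mult_nonneg_nonneg) auto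
  have hint: "(h has_integral v) UNIV"
    unfolding h_def v_def
    by (intro has_integral_add has_integral_mult_right has_integral_sum A(1) int_inv_sq cpos) simp
  have nnh: "(\<integral>\<^sup>+ s. ennreal (h s) \<partial>lborel) = ennreal v"
  proof (rule nn_integral_has_integral_lborel)
    show "h \<in> borel_measurable borel" unfolding h_def using A(1) by measurable
  qed (use hnn hint in auto)
  have pw: "h s \<le> indicator {1..} s * (omegaM_tilde M (t * s) / s\<^sup>2)" for s
  proof (cases "1 \<le> s")
    case False
    then have "\<forall>k\<in>A. s \<notin> {c k..}" using c1 by (auto simp: not_le intro: less_le_trans)
    then show ?thesis using False by (simp add: h_def)
  next
    case True
    have sp: "0 < s\<^sup>2" using True by simp
    have "(\<Sum>k\<in>A. (if s \<in> {c k..} then 1 / s\<^sup>2 else (0::real))) = (\<Sum>k\<in>A. (if exp 1 * max 1 (quot M k / t) \<le> s then 1 else 0)) / s\<^sup>2"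
      by (simp add: sum_divide_distrib c_def) (intro sum.cong, auto)
    then have "h s = (omegaM M t + (\<Sum>k\<in>A. (if exp 1 * max 1 (quot M k / t) \<le> s then 1 else 0))) / s\<^sup>2"
      using True by (simp add: h_def add_divide_distrib)
    also have "\<dots> \<le> omegaM M (t * s) / s\<^sup>2"
      using omega_diff[OF ws t0 True A] sp by (intro divide_right_mono) auto
    also have "\<dots> \<le> omegaM_tilde M (t * s) / s\<^sup>2"
      unfolding omegaM_tilde_def using sp by (intro divide_right_mono) auto
    finally show ?thesis using True by simp
  qed
  have "ennreal v \<le> (\<integral>\<^sup>+ s. ennreal (indicator {1..} s * (omegaM_tilde M (t * s) / s\<^sup>2)) \<partial>lborel)"
    unfolding nnh[symmetric] by (intro nn_integral_mono ennreal_leI pw)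
  then have "enn2real (ennreal v) \<le> kappa (omegaM_tilde M) t"
    unfolding kappa_nn[OF ws] by (rule enn2real_mono) (rule kappa_fin[OF ws nq t])
  moreover have "0 \<le> v" unfolding v_def using omega_nonneg[OF ws, of t] cpos
    by (intro add_nonneg_nonneg sum_nonneg) (auto intro: less_imp_le)
  ultimately show ?thesis by (simp add: v_def c_def)
qed

lemma pow_exp: fixes x :: real assumes x: "0 \<le> x" shows "x ^ L \<le> real L ^ L * exp x"
proof (cases "L = 0")
  case True then show ?thesis using x by simp
next
  case False
  then have "(1 + x / real L) ^ L \<le> exp x" using x by (intro exp_ge_one_plus_x_over_n_power_n) auto
  moreover have "(x / real L) ^ L \<le> (1 + x / real L) ^ L" using x by (intro power_mono) auto
  ultimately have "(x / real L) ^ L \<le> exp x" by linarith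
  then have "x ^ L / real L ^ L \<le> exp x" by (simp add: power_divide)
  then show ?thesis using False by (simp add: field_simps)
qed

lemma key_est: assumes ws: "weight_seq M" and nq: "nonquasianalytic M"
  and D: "\<forall>t\<ge>0. \<bar>\<kappa>' t - kappa (omegaM_tilde M) t\<bar> \<le> D"
  and j: "1 \<le> j" and ij: "i < j" and T: "T = (\<Sum>k<n. 1 / quot M (k + j))" and Tp: "0 < T"
  and y: "0 \<le> y"
  shows "real j * y - \<kappa>' (exp y) \<le> ln (M i * (exp 1 * real (j - i) / T) ^ (j - i) * exp D)"
proof -
  define t where "t = exp y"
  define L where "L = j - i"
  have L1: "1 \<le> L" using ij by (simp add: L_def)
  have t1: "1 \<le> t" using y by (simp add: t_def)
  have t0: "0 < t" by (simp add: t_def)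
  define A where "A = (\<lambda>k. k + j) ` {..<n}"
  have A: "finite A" "A \<subseteq> {1..}" using j by (auto simp: A_def)
  define r where "r = min t (quot M j)"
  have r0: "0 < r" using t0 quot_pos[OF ws, of j] by (simp add: r_def)
  have "(\<Sum>k\<in>A. 1 / (exp 1 * max 1 (quot M k / t))) = (\<Sum>k<n. 1 / (exp 1 * max 1 (quot M (k + j) / t)))"
    unfolding A_def by (subst sum.reindex) (auto simp: inj_on_def)
  also have "\<dots> \<ge> (\<Sum>k<n. r / exp 1 * (1 / quot M (k + j)))"
  proof (intro sum_mono)
    fix k
    have q: "0 < quot M (k + j)" by (rule quot_pos[OF ws])
    have rq: "r \<le> quot M (k + j)" using quot_mono[OF ws, of j "k + j"] by (simp add: r_def)
    have "r * max 1 (quot M (k + j) / t) \<le> quot M (k + j)"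
    proof (cases "1 \<le> quot M (k + j) / t")
      case True
      have "r * (quot M (k + j) / t) \<le> t * (quot M (k + j) / t)"
        using q t0 by (intro mult_right_mono) (auto simp: r_def)
      then show ?thesis using True t0 by (simp add: max_def)
    next
      case False then show ?thesis using rq by (simp add: max_def)
    qed
    then show "r / exp 1 * (1 / quot M (k + j)) \<le> 1 / (exp 1 * max 1 (quot M (k + j) / t))"
      using q r0 by (simp add: field_simps)
  qed
  moreover have "(\<Sum>k<n. r / exp 1 * (1 / quot M (k + j))) = r / exp 1 * T"
    unfolding T by (rule sum_distrib_left[symmetric])
  ultimately have S: "r * T / exp 1 \<le> (\<Sum>k\<in>A. 1 / (exp 1 * max 1 (quot M k / t)))"
    by simp
  have kap: "omegaM M t + r * T / exp 1 \<le> kappa (omegaM_tilde M) t"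
    using kappa_lower[OF ws nq t1 A] S by linarith
  have kn: "kappa (omegaM_tilde M) t - D \<le> \<kappa>' t"
  proof -
    have "\<bar>\<kappa>' t - kappa (omegaM_tilde M) t\<bar> \<le> D" using D t0 by simp
    then show ?thesis by linarith
  qed
  have Mi: "0 < M i" by (rule ws_pos[OF ws])
  have om: "real j * y - omegaM M t \<le> ln (M i) + real L * ln r"
  proof (cases "t \<le> quot M j")
    case True
    then have "r = t" by (simp add: r_def)
    have "ln (t ^ i * M 0 / M i) \<le> omegaM M t" by (rule omega_ge[OF ws t0])
    moreover have "ln (t ^ i * M 0 / M i) = real i * y - ln (M i)"
      using ws_M0[OF ws] Mi by (simp add: t_def ln_div ln_realpow)
    moreover have "real j * y = real i * y + real L * y" using ij by (simp add: L_def algebra_simps)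
    ultimately show ?thesis using \<open>r = t\<close> by (simp add: t_def)
  next
    case False
    then have rr: "r = quot M j" by (simp add: r_def)
    have "ln (t ^ j * M 0 / M j) \<le> omegaM M t" by (rule omega_ge[OF ws t0])
    moreover have "ln (t ^ j * M 0 / M j) = real j * y - ln (M j)"
      using ws_M0[OF ws] ws_pos[OF ws, of j] by (simp add: t_def ln_div ln_realpow)
    moreover have "ln (M j) \<le> ln (M i * quot M j ^ L)"
      using M_le[OF ws, of i j] ij ws_pos[OF ws, of j] by (subst ln_le_cancel_iff) (auto simp: L_def)
    moreover have "ln (M i * quot M j ^ L) = ln (M i) + real L * ln (quot M j)"
      using Mi quot_pos[OF ws, of j] by (simp add: ln_mult ln_realpow)
    ultimately show ?thesis unfolding rr by linarith
  qed
  have ex: "real L * ln r \<le> real L * ln (exp 1 * real L / T) + r * T / exp 1"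
  proof -
    have "(r * T / exp 1) ^ L \<le> real L ^ L * exp (r * T / exp 1)"
      using r0 Tp by (intro pow_exp) auto
    then have "r ^ L * (T / exp 1) ^ L \<le> real L ^ L * exp (r * T / exp 1)"
      by (simp add: power_mult_distrib[symmetric])
    then have "r ^ L \<le> (exp 1 * real L / T) ^ L * exp (r * T / exp 1)"
      using Tp by (simp add: field_simps power_divide power_mult_distrib)
    then have "ln (r ^ L) \<le> ln ((exp 1 * real L / T) ^ L * exp (r * T / exp 1))"
      using r0 by (subst ln_le_cancel_iff) (use L1 Tp in auto)
    then show ?thesis using r0 L1 Tp by (simp add: ln_mult ln_realpow)
  qed
  have "real j * y - \<kappa>' (exp y) \<le> ln (M i) + real L * ln (exp 1 * real L / T) + D"
    using om ex kap kn unfolding t_def by linarith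
  also have "\<dots> = ln (M i * (exp 1 * real L / T) ^ L * exp D)"
    using Mi L1 Tp by (simp add: ln_mult ln_realpow)
  finally show ?thesis by (simp add: L_def)
qed

lemma sv_seq: assumes ws: "weight_seq M" and nq: "nonquasianalytic M"
  and nv: "normalized_version (kappa (omegaM_tilde M)) \<kappa>'"
  shows "prec_SV (assoc_seq \<kappa>') M"
proof -
  obtain D where D: "\<forall>t\<ge>0. \<bar>\<kappa>' t - kappa (omegaM_tilde M) t\<bar> \<le> D"
    using nv unfolding normalized_version_def by blast
  have D0: "0 \<le> D" using D[rule_format, of 0] by simp
  define E where "E = exp D"
  have E1: "1 \<le> E" using D0 by (simp add: E_def)
  have main: "(1 / real j) * (assoc_seq \<kappa>' j / (real 1 ^ j * M i)) powr (1 / real (j - i))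
        * (\<Sum>k. 1 / quot M (k + j)) \<le> 2 * exp 1 * E" if j: "1 \<le> j" and ij: "i < j" for j i
  proof -
    define \<sigma> where "\<sigma> = (\<Sum>k. 1 / quot M (k + j))"
    have sm: "summable (\<lambda>k. 1 / quot M (k + j))"
      using summable_ignore_initial_segment[of "\<lambda>k. 1 / quot M k" j] nq unfolding nonquasianalytic_def by simp
    have sp: "0 < \<sigma>" unfolding \<sigma>_def using sm quot_pos[OF ws] by (intro suminf_pos) auto
    have "(\<lambda>n. \<Sum>k<n. 1 / quot M (k + j)) \<longlonglongrightarrow> \<sigma>" unfolding \<sigma>_def by (rule summable_LIMSEQ[OF sm])
    then have "eventually (\<lambda>n. \<sigma> / 2 < (\<Sum>k<n. 1 / quot M (k + j))) sequentially"
      using sp by (intro order_tendstoD(1)) auto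
    then obtain n where n: "\<sigma> / 2 < (\<Sum>k<n. 1 / quot M (k + j))" by (auto simp: eventually_sequentially)
    define T where "T = (\<Sum>k<n. 1 / quot M (k + j))"
    have Tp: "0 < T" using n sp by (simp add: T_def)
    define L where "L = j - i"
    have L1: "1 \<le> L" using ij by (simp add: L_def)
    define x where "x = exp 1 * real L / T"
    have xp: "0 < x" using Tp L1 by (simp add: x_def)
    have Mi: "0 < M i" by (rule ws_pos[OF ws])
    define B where "B = M i * x ^ L * exp D"
    have Bp: "0 < B" using Mi xp by (simp add: B_def)
    have ph: "phistar \<kappa>' (real j) \<le> ln B"
      unfolding phistar_def
    proof (rule cSUP_least)
      show "{0::real..} \<noteq> {}" by auto
      fix y :: real assume "y \<in> {0..}"
      then show "real j * y - \<kappa>' (exp y) \<le> ln B"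
        using key_est[OF ws nq D j ij T_def Tp] by (simp add: B_def x_def L_def)
    qed
    have K: "assoc_seq \<kappa>' j \<le> B"
    proof -
      have "assoc_seq \<kappa>' j \<le> exp (ln B)" unfolding assoc_seq_def using ph by simp
      then show ?thesis using Bp by simp
    qed
    have Knn: "0 \<le> assoc_seq \<kappa>' j" by (simp add: assoc_seq_def)
    have r1: "assoc_seq \<kappa>' j / (real 1 ^ j * M i) \<le> (E * x) ^ L"
    proof -
      have "assoc_seq \<kappa>' j / (real 1 ^ j * M i) \<le> B / M i" using K Mi by (simp add: divide_right_mono)
      also have "\<dots> = x ^ L * E" using Mi by (simp add: B_def E_def)
      also have "\<dots> \<le> x ^ L * E ^ L" using xp E1 L1 by (intro mult_left_mono self_le_power) auto
      also have "\<dots> = (E * x) ^ L" by (simp add: power_mult_distrib)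
      finally show ?thesis .
    qed
    have "(assoc_seq \<kappa>' j / (real 1 ^ j * M i)) powr (1 / real (j - i)) \<le> ((E * x) ^ L) powr (1 / real L)"
      unfolding L_def[symmetric] using r1 Knn Mi by (intro powr_mono2) auto
    also have "\<dots> = E * x"
    proof -
      have Ex: "0 < E * x" using E1 xp by simp
      have "((E * x) ^ L) powr (1 / real L) = ((E * x) powr real L) powr (1 / real L)"
        using Ex by (simp add: powr_realpow)
      also have "\<dots> = (E * x) powr (real L * (1 / real L))" by (simp add: powr_powr)
      also have "\<dots> = E * x" using L1 Ex by simp
      finally show ?thesis .
    qed
    finally have pw: "(assoc_seq \<kappa>' j / (real 1 ^ j * M i)) powr (1 / real (j - i)) \<le> E * x" .
    have "(1 / real j) * (assoc_seq \<kappa>' j / (real 1 ^ j * M i)) powr (1 / real (j - i)) * \<sigma>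
        \<le> (1 / real j) * (E * x) * \<sigma>"
      using pw sp j by (intro mult_right_mono mult_left_mono) auto
    also have "\<dots> = E * exp 1 * (real L / real j) * (\<sigma> / T)" by (simp add: x_def)
    also have "\<dots> \<le> E * exp 1 * 1 * 2"
    proof (intro mult_mono)
      show "real L / real j \<le> 1" using j by (simp add: L_def)
      show "\<sigma> / T \<le> 2" using n Tp by (simp add: T_def field_simps)
    qed (use E1 Tp sp L1 in auto)
    finally show ?thesis by (simp add: \<sigma>_def mult.commute mult.left_commute)
  qed
  show ?thesis unfolding prec_SV_def
    by (intro exI[of _ "1::nat"] conjI exI[of _ "2 * exp 1 * E"] allI impI main) auto
qed

theorem corollary4p3:
  fixes Mat :: "real \<Rightarrow> nat \<Rightarrow> real"
    and \<kappa>n :: "real \<Rightarrow> real \<Rightarrow> real"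
  assumes "weight_matrix Mat"
    and "nonquasianalytic_matrix Mat"
    and "R_moderate_growth Mat"
    and "\<forall>\<alpha>>0. normalized_version (kappa (omegaM_tilde (Mat \<alpha>))) (\<kappa>n \<alpha>)"
  shows "\<forall>\<alpha>>0. \<exists>\<beta>>0. prec_SV (assoc_seq (\<kappa>n \<alpha>)) (Mat \<beta>)"
proof (intro allI impI)
  fix \<alpha> :: real assume a: "0 < \<alpha>"
  have ws: "weight_seq (Mat \<alpha>)" using assms(1) a by (simp add: weight_matrix_def)
  have nq: "nonquasianalytic (Mat \<alpha>)" using assms(2) a by (simp add: nonquasianalytic_matrix_def)
  have "prec_SV (assoc_seq (\<kappa>n \<alpha>)) (Mat \<alpha>)" using sv_seq[OF ws nq] assms(4) a by simp
  then show "\<exists>\<beta>>0. prec_SV (assoc_seq (\<kappa>n \<alpha>)) (Mat \<beta>)" using a by blast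
qed

end
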